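(* Let $a\in\mathbb{C}$ and $b=0$, and suppose $\cdot_\lambda\cdot$ is a compatible left-symmetric conformal algebraic structure on $\mathcal{W}(a,0)=\mathbb{C}[\partial]L\oplus\mathbb{C}[\partial]W$ such that $\mathbb{C}[\partial]L$ is a left-symmetric conformal subalgebra. Let $c\in\mathbb{C}$ with $L_\lambda L=(\partial+\lambda+c)L$, and write $L_\lambda W=g_1L+g_2W$, $W_\lambda L=h_1L+h_2W$, $W_\lambda W=k_1L+k_2W$ with $g_i,h_i,k_i\in\mathbb{C}[\lambda,\partial]$. Assume $c\neq0$, $g_2(\lambda,\partial)=\partial+a\lambda+c$ and $h_2(\lambda,\partial)=c$. Then one of the following holds: (B3) $h_1=g_1=k_1=k_2=0$, $h_2=c$, $g_2=\partial+a\lambda+c$; (B4) $a=1$, $h_1=g_1=0$, $h_2=c$, $g_2=\partial+\lambda+c$, and $k_1,k_2$ are constants with $(k_1,k_2)\in\mathbb{C}^2\setminus\{(0,0)\}$.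
   Context: A conformal algebra is a $\mathbb{C}[\partial]$-module $R$ with a $\mathbb{C}$-bilinear map $R\times R\to R[\lambda]$, $(x,y)\mapsto x_\lambda y$, satisfying $(\partial x)_\lambda y=-\lambda\, x_\lambda y$ and $x_\lambda(\partial y)=(\partial+\lambda)\,x_\lambda y$. For $x,y\in R$, $y_{-\lambda-\partial}x$ means: write $y_\mu x=\sum_j \mu^j z_j$ and set $y_{-\lambda-\partial}x=\sum_j(-\lambda-\partial)^j z_j$. A left-symmetric conformal algebra is a conformal algebra with $(x_\lambda y)_{\lambda+\mu}z-x_\lambda(y_\mu z)=(y_\mu x)_{\lambda+\mu}z-y_\mu(x_\lambda z)$. A compatible left-symmetric conformal algebraic structure on a Lie conformal algebra $(R,[\cdot_\lambda\cdot])$ is a left-symmetric conformal product on the same $\mathbb{C}[\partial]$-module with $x_\lambda y-y_{-\lambda-\partial}x=[x_\lambda y]$ for all $x,y$. $\mathcal{W}(a,b)$ is the free $\mathbb{C}[\partial]$-module with basis $L,W$ and Lie conformal brackets $[L_\lambda L]=(\partial+2\lambda)L$, $[L_\lambda W]=(\partial+a\lambda+b)W$, $[W_\lambda W]=0$. "$\mathbb{C}[\partial]L$ is a left-symmetric conformal subalgebra" means $L_\lambda L\in(\mathbb{C}[\partial]L)[\lambda]$; in that case $L_\lambda L=(\partial+\lambda+c)L$ for some $c\in\mathbb{C}$. *)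

theory Defs
  imports "HOL-Computational_Algebra.Polynomial"
begin

datatype gen = Lg | Wg

text \<open>Polynomials in (lambda, d) are represented as complex poly poly:
  outer variable lambda, coefficients polynomials in d.  Evaluation:\<close>
definition ev2 :: "complex poly poly \<Rightarrow> complex \<Rightarrow> complex \<Rightarrow> complex" where
  "ev2 P l d = poly (map_poly (\<lambda>q. poly q d) P) l"

text \<open>Elements of R: coefficient functions gen => C[d].\<close>
type_synonym elt = "gen \<Rightarrow> complex poly"

definition basis_elt :: "gen \<Rightarrow> elt" where
  "basis_elt a = (\<lambda>b. if b = a then 1 else 0)"

text \<open>A conformal product on R is determined (by sesquilinearity) by its structure
  polynomials: sc a b c = coefficient of c in  a_lambda b.  The product
  x_lambda y evaluated at lambda = l, d = d, component c:
  (p(d)a)_l (r(d)b) = p(-l) r(l+d) a_l b.\<close>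
definition prodv :: "(gen \<Rightarrow> gen \<Rightarrow> gen \<Rightarrow> complex poly poly) \<Rightarrow> elt \<Rightarrow> elt
    \<Rightarrow> complex \<Rightarrow> complex \<Rightarrow> gen \<Rightarrow> complex" where
  "prodv sc x y l d c =
     (\<Sum>a\<in>{Lg, Wg}. \<Sum>b\<in>{Lg, Wg}. poly (x a) (-l) * poly (y b) (l + d) * ev2 (sc a b c) l d)"

text \<open>(x_l y)_{l+m} z, evaluated at d, component c.\<close>
definition lsterm1 :: "(gen \<Rightarrow> gen \<Rightarrow> gen \<Rightarrow> complex poly poly) \<Rightarrow> elt \<Rightarrow> elt \<Rightarrow> elt
    \<Rightarrow> complex \<Rightarrow> complex \<Rightarrow> complex \<Rightarrow> gen \<Rightarrow> complex" where
  "lsterm1 sc x y z l m d c =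
     (\<Sum>e\<in>{Lg, Wg}. prodv sc x y l (-l-m) e * prodv sc (basis_elt e) z (l+m) d c)"

text \<open>x_l (y_m z), evaluated at d, component c.\<close>
definition lsterm2 :: "(gen \<Rightarrow> gen \<Rightarrow> gen \<Rightarrow> complex poly poly) \<Rightarrow> elt \<Rightarrow> elt \<Rightarrow> elt
    \<Rightarrow> complex \<Rightarrow> complex \<Rightarrow> complex \<Rightarrow> gen \<Rightarrow> complex" where
  "lsterm2 sc x y z l m d c =
     (\<Sum>e\<in>{Lg, Wg}. prodv sc y z m (l+d) e * prodv sc x (basis_elt e) l d c)"

text \<open>Left-symmetry identity, as a polynomial identity in (lambda, mu, d),
  checked pointwise on C^3 (equivalent for polynomials over C).\<close>
definition left_symmetric :: "(gen \<Rightarrow> gen \<Rightarrow> gen \<Rightarrow> complex poly poly) \<Rightarrow> bool" where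
  "left_symmetric sc \<longleftrightarrow> (\<forall>x y z l m d c.
     lsterm1 sc x y z l m d c - lsterm2 sc x y z l m d c =
     lsterm1 sc y x z m l d c - lsterm2 sc y x z m l d c)"

text \<open>Lie conformal brackets of W(a,b); [W_l L] = -[L_{-l-d} W] = ((a-1)d + a l - b) W
  by skew-symmetry.\<close>
definition Wbr :: "complex \<Rightarrow> complex \<Rightarrow> gen \<Rightarrow> gen \<Rightarrow> gen \<Rightarrow> complex poly poly" where
  "Wbr a b x y c =
    (case (x, y, c) of
       (Lg, Lg, Lg) \<Rightarrow> [:[:0, 1:], [:2:]:]
     | (Lg, Wg, Wg) \<Rightarrow> [:[:b, 1:], [:a:]:]
     | (Wg, Lg, Wg) \<Rightarrow> [:[:-b, a - 1:], [:a:]:]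
     | _ \<Rightarrow> 0)"

definition compatible :: "(gen \<Rightarrow> gen \<Rightarrow> gen \<Rightarrow> complex poly poly)
    \<Rightarrow> (gen \<Rightarrow> gen \<Rightarrow> gen \<Rightarrow> complex poly poly) \<Rightarrow> bool" where
  "compatible sc br \<longleftrightarrow> (\<forall>x y l d c.
     prodv sc x y l d c - prodv sc y x (-l-d) d c = prodv br x y l d c)"

end

theory Submission
  imports Defs
begin

lemma ev2_pCons[simp]: "ev2 (pCons a P) x d = poly a d + x * ev2 P x d"
  by (simp add: ev2_def map_poly_pCons)
lemma ev2_0[simp]: "ev2 0 x d = 0"
  by (simp add: ev2_def)
lemma ev2_add[simp]: "ev2 (P + Q) x d = ev2 P x d + ev2 Q x d"
  by (induction P Q rule: poly_induct2) (simp_all add: algebra_simps)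
lemma ev2_uminus[simp]: "ev2 (- P) x d = - ev2 P x d"
  by (induction P) (simp_all add: algebra_simps)
lemma ev2_diff[simp]: "ev2 (P - Q) x d = ev2 P x d - ev2 Q x d"
  using ev2_add[of P "-Q"] by simp
lemma ev2_smult[simp]: "ev2 (smult q P) x d = poly q d * ev2 P x d"
  by (induction P) (simp_all add: algebra_simps)
lemma ev2_const[simp]: "ev2 [:q:] x d = poly q d"
  by simp
lemma ev2_monom[simp]: "ev2 (monom q n) x d = poly q d * x ^ n"
  by (simp add: ev2_def map_poly_monom poly_monom)
lemma ev2_map_mult: "ev2 (map_poly (\<lambda>q. r * q) P) x d = poly r d * ev2 P x d"
  by (induction P) (simp_all add: map_poly_pCons algebra_simps)
lemma ev2_pcomp: "poly (poly Q [:u, v:]) d = ev2 Q (u + v * d) d"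
  by (induction Q) (simp_all add: algebra_simps)

lemma ev2_mapc[simp]: "ev2 (map_poly (\<lambda>z. [:z:]) S) x d = poly S x"
  unfolding ev2_def by (simp add: map_poly_map_poly o_def)

lemma ev2_inj:
  assumes "\<And>x d. ev2 A x d = 0" shows "A = 0"
proof -
  have "\<forall>i. \<forall>d. poly (coeff A i) d = 0"
  proof (intro allI)
    fix i d
    have "map_poly (\<lambda>q. poly q d) A = 0"
      using assms poly_all_0_iff_0 unfolding ev2_def by blast
    then have "coeff (map_poly (\<lambda>q. poly q d) A) i = 0" by simp
    then show "poly (coeff A i) d = 0" by (simp add: coeff_map_poly)
  qed
  then have "\<forall>i. coeff A i = 0" using poly_all_0_iff_0 by blast
  then show ?thesis by (simp add: poly_eq_iff)
qed

lemma DERIV_ev2: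
  assumes f: "(f has_field_derivative f') (at x within S)"
    and g: "(g has_field_derivative g') (at x within S)"
  shows "((\<lambda>m. ev2 P (f m) (g m)) has_field_derivative
     (f' * ev2 (pderiv P) (f x) (g x) + g' * ev2 (map_poly pderiv P) (f x) (g x))) (at x within S)"
proof (induction P)
  case 0
  then show ?case by (simp add: pderiv_0)
next
  case (pCons a P)
  have ga: "((\<lambda>m. poly a (g m)) has_field_derivative g' * poly (pderiv a) (g x)) (at x within S)"
    using DERIV_chain2[OF poly_DERIV g] by (simp add: mult.commute)
  have "((\<lambda>m. poly a (g m) + f m * ev2 P (f m) (g m)) has_field_derivative
     g' * poly (pderiv a) (g x) + (f' * ev2 P (f x) (g x) + f x * (f' * ev2 (pderiv P) (f x) (g x) + g' * ev2 (map_poly pderiv P) (f x) (g x)))) (at x within S)"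
    using DERIV_add[OF ga DERIV_mult[OF f pCons.IH]] by (simp add: algebra_simps)
  then show ?case
    by (simp add: pderiv_pCons map_poly_pCons pderiv_0 algebra_simps)
qed


lemma DERIV_ev2_eq[derivative_intros]:
  assumes "(f has_field_derivative f') (at x within S)"
    and "(g has_field_derivative g') (at x within S)"
    and "D = f' * ev2 (pderiv P) (f x) (g x) + g' * ev2 (map_poly pderiv P) (f x) (g x)"
  shows "((\<lambda>m. ev2 P (f m) (g m)) has_field_derivative D) (at x within S)"
  using DERIV_ev2[OF assms(1,2)] assms(3) by simp

lemma deriv_zero:
  assumes "((\<lambda>m. F m) has_field_derivative D) (at x)" and "\<And>m. F m = 0"
  shows "D = (0::complex)"
proof -
  have "(\<lambda>m. F m) = (\<lambda>m. 0)" using assms(2) by auto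
  then have "((\<lambda>m. 0) has_field_derivative D) (at x)" using assms(1) by simp
  moreover have "((\<lambda>m. 0) has_field_derivative 0) (at x)" by simp
  ultimately show ?thesis using DERIV_unique by blast
qed

lemma ode_deg:
  fixes q :: "complex poly"
  assumes h: "[:c,1:] * pderiv q = smult k q" and q0: "q \<noteq> 0"
  shows "k = of_nat (degree q)"
proof -
  let ?n = "degree q"
  have e: "[:c,1:] * pderiv q = smult c (pderiv q) + pCons 0 (pderiv q)"
    by (simp add: mult_pCons_left)
  have c1: "coeff (pderiv q) ?n = 0"
    by (simp add: coeff_pderiv coeff_eq_0)
  have c2: "coeff (pCons 0 (pderiv q)) ?n = of_nat ?n * coeff q ?n"
    by (cases ?n) (simp_all add: coeff_pderiv)
  have "coeff ([:c,1:] * pderiv q) ?n = of_nat ?n * coeff q ?n"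
    unfolding e using c1 c2 by simp
  moreover have "coeff ([:c,1:] * pderiv q) ?n = k * coeff q ?n" by (simp only: h coeff_smult)
  ultimately have "k * coeff q ?n = of_nat ?n * coeff q ?n" by auto
  moreover have "coeff q ?n \<noteq> 0" using q0 by simp
  ultimately show ?thesis by simp
qed

lemma ode_sol:
  fixes q :: "complex poly"
  assumes h: "[:c,1:] * pderiv q = smult (of_nat n) q"
  shows "q = smult (coeff q n) ([:c,1:]^n)"
proof (rule ccontr)
  define p where "p = [:c,1:]^n"
  define r where "r = q - smult (coeff q n) p"
  assume "q \<noteq> smult (coeff q n) ([:c,1:]^n)"
  then have r0: "r \<noteq> 0" unfolding r_def p_def by simp
  have pp: "[:c,1:] * pderiv p = smult (of_nat n) p"
  proof (cases n)
    case 0 then show ?thesis by (simp add: p_def)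
  next
    case (Suc k)
    have d1: "pderiv [:c,1::complex:] = 1" by (simp add: pderiv_pCons)
    have "pderiv p = smult (of_nat (Suc k)) ([:c,1:]^k)"
      unfolding p_def Suc by (simp only: pderiv_power_Suc d1 mult_1_right)
    then show ?thesis unfolding p_def Suc by (simp del: power_Suc add: power_Suc[symmetric] mult_smult_right)
  qed
  have "[:c,1:] * pderiv r = smult (of_nat n) r"
    unfolding r_def using h pp by (simp add: pderiv_diff pderiv_smult algebra_simps smult_diff_right)
  then have "of_nat n = (of_nat (degree r) :: complex)" by (rule ode_deg[OF _ r0])
  then have dr: "degree r = n" by simp
  have "coeff p n = 1" unfolding p_def by (simp add: coeff_linear_power)
  then have "coeff r n = 0" unfolding r_def by simp
  then show False using dr r0 by (metis leading_coeff_0_iff)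
qed

lemma poly_cont:
  fixes p :: "complex poly"
  assumes "\<And>t. t \<noteq> t0 \<Longrightarrow> poly p t = K"
  shows "poly p t0 = K"
proof -
  have "{t. poly (p - [:K:]) t = 0} \<supseteq> UNIV - {t0}" using assms by auto
  moreover have "infinite (UNIV - {t0} :: complex set)"
    by (simp add: infinite_UNIV_char_0)
  ultimately have "infinite {t. poly (p - [:K:]) t = 0}" using infinite_super by blast
  then have "p - [:K:] = 0" using poly_roots_finite by blast
  then show ?thesis by simp
qed

lemma ev2_x0: "ev2 P 0 t = poly (coeff P 0) t"
  by (simp add: ev2_def poly_0_coeff_0 coeff_map_poly)

lemma prodv_basis[simp]: "prodv sc (basis_elt a) (basis_elt b) l d c = ev2 (sc a b c) l d"
  by (cases a; cases b) (simp_all add: prodv_def basis_elt_def)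

lemma ls_basis: "lsterm1 sc (basis_elt x) (basis_elt y) (basis_elt z) l m d c =
   ev2 (sc x y Lg) l (-l-m) * ev2 (sc Lg z c) (l+m) d + ev2 (sc x y Wg) l (-l-m) * ev2 (sc Wg z c) (l+m) d"
  by (simp add: lsterm1_def)

lemma ls_basis2: "lsterm2 sc (basis_elt x) (basis_elt y) (basis_elt z) l m d c =
   ev2 (sc y z Lg) m (l+d) * ev2 (sc x Lg c) l d + ev2 (sc y z Wg) m (l+d) * ev2 (sc x Wg c) l d"
  by (simp add: lsterm2_def)

lemma ev2_c1[simp]: "ev2 [:[:c, 1:], [:a:]:] l d = c + d + a * l"
  by (simp add: algebra_simps)

theorem lemma3p4:
  fixes a c :: complex
    and sc :: "gen \<Rightarrow> gen \<Rightarrow> gen \<Rightarrow> complex poly poly"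
  assumes ls: "left_symmetric sc"
    and comp: "compatible sc (Wbr a 0)"
    and LL_L: "sc Lg Lg Lg = [:[:c, 1:], [:1:]:]"
    and LL_W: "sc Lg Lg Wg = 0"
    and c0: "c \<noteq> 0"
    and g2: "sc Lg Wg Wg = [:[:c, 1:], [:a:]:]"
    and h2: "sc Wg Lg Wg = [:[:c:]:]"
  shows "(sc Wg Lg Lg = 0 \<and> sc Lg Wg Lg = 0 \<and> sc Wg Wg Lg = 0 \<and> sc Wg Wg Wg = 0
          \<and> sc Wg Lg Wg = [:[:c:]:] \<and> sc Lg Wg Wg = [:[:c, 1:], [:a:]:])
       \<or> (a = 1 \<and> sc Wg Lg Lg = 0 \<and> sc Lg Wg Lg = 0
          \<and> sc Wg Lg Wg = [:[:c:]:] \<and> sc Lg Wg Wg = [:[:c, 1:], [:1:]:]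
          \<and> (\<exists>k1 k2. sc Wg Wg Lg = [:[:k1:]:] \<and> sc Wg Wg Wg = [:[:k2:]:] \<and> (k1, k2) \<noteq> (0, 0)))"
proof -
  have LS: "\<And>x y z l m d e. lsterm1 sc (basis_elt x) (basis_elt y) (basis_elt z) l m d e - lsterm2 sc (basis_elt x) (basis_elt y) (basis_elt z) l m d e = lsterm1 sc (basis_elt y) (basis_elt x) (basis_elt z) m l d e - lsterm2 sc (basis_elt y) (basis_elt x) (basis_elt z) m l d e"
    using ls unfolding left_symmetric_def by blast
  have CP: "\<And>x y l d e. prodv sc (basis_elt x) (basis_elt y) l d e - prodv sc (basis_elt y) (basis_elt x) (-l-d) d e = prodv (Wbr a 0) (basis_elt x) (basis_elt y) l d e"
    using comp unfolding compatible_def by blast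
  define P where "P = sc Wg Lg Lg"
  define Q where "Q = sc Lg Wg Lg"
  define R1 where "R1 = sc Wg Wg Lg"
  define R2 where "R2 = sc Wg Wg Wg"
  note defs = P_def[symmetric] Q_def[symmetric] R1_def[symmetric] R2_def[symmetric]
  have c1: "ev2 Q l d = ev2 P (-l-d) d" for l d using CP[of Lg Wg l d Lg] by (simp add: defs Wbr_def)
  have c2: "ev2 R1 l d = ev2 R1 (-l-d) d" for l d using CP[of Wg Wg l d Lg] by (simp add: defs Wbr_def)
  have c3: "ev2 R2 l d = ev2 R2 (-l-d) d" for l d using CP[of Wg Wg l d Wg] by (simp add: defs Wbr_def)
  have e: "\<And>l m::complex. -m-l = -l-m" by simp
  note simps = ls_basis ls_basis2 defs LL_L LL_W g2 h2 e
  have E1: "(l+m-a*m)*ev2 P (l+m) d = (l+d+m+c)*ev2 P l d - (d+m+c)*ev2 P l (m+d) - c*ev2 Q m d" for l m d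
    using LS[of Wg Lg Lg l m d Lg] c1[of m "-l-m"] by (simp add: simps algebra_simps)
  have E2: "(c-m)*ev2 Q (l+m) d - (d+l+c)*ev2 Q m (l+d) - (l+d+a*m+c)*ev2 Q l d = (c-l)*ev2 Q (l+m) d - (d+m+c)*ev2 Q l (m+d) - (m+d+a*l+c)*ev2 Q m d" for l m d
    using LS[of Lg Lg Wg l m d Lg] by (simp add: simps algebra_simps)
  have E3: "(l+m-a*m)*ev2 R2 (l+m) d - (l+d+a*m+c)*ev2 R2 l d + (d+a*m+c)*ev2 R2 l (m+d) = c*ev2 Q m (l+d)" for l m d
    using LS[of Wg Lg Wg l m d Wg] c1[of m "-l-m"] by (simp add: simps algebra_simps)
  have E4: "(l+m-a*m)*ev2 R1 (l+m) d - (l+d+a*m+c)*ev2 R1 l d + (d+m+c)*ev2 R1 l (m+d) = ev2 Q m (l+d) * ev2 P l d - ev2 R2 l (m+d) * ev2 Q m d" for l m d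
    using LS[of Wg Lg Wg l m d Lg] c1[of m "-l-m"] by (simp add: simps algebra_simps)
  have E5L: "ev2 P m (l+d) * ev2 P l d + c * ev2 R1 l d = ev2 P l (m+d) * ev2 P m d + c * ev2 R1 m d" for l m d
    using LS[of Wg Wg Lg l m d Lg] c2[of l "-l-m"] c3[of l "-l-m"] by (simp add: simps algebra_simps)
  have E5W: "ev2 R2 l d - ev2 R2 m d = ev2 P l (m+d) - ev2 P m (l+d)" for l m d
  proof -
    have "c * (ev2 R2 l d - ev2 R2 m d) = c * (ev2 P l (m+d) - ev2 P m (l+d))"
      using LS[of Wg Wg Lg l m d Wg] c3[of l "-l-m"] by (simp add: simps algebra_simps)
    then show ?thesis using c0 by simp
  qed
  have E6: "c * ev2 R1 m (l+d) + ev2 R2 m (l+d) * ev2 R2 l d = c * ev2 R1 l (m+d) + ev2 R2 l (m+d) * ev2 R2 m d" for l m d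
    using LS[of Wg Wg Wg l m d Wg] c2[of l "-l-m"] c3[of l "-l-m"] by (simp add: simps algebra_simps)
  have z0: "ev2 P (-d) d = 0" for d
    using E1[of 0 0 d] c1[of 0 d] c0 by simp
  define Hx where "Hx = pderiv P"
  define Hd where "Hd = map_poly pderiv P"
  have D1: "(1-a) * ev2 P l d + l * ev2 Hx l d + (d+c) * ev2 Hd l d - c * ev2 Hx (-d) d = 0" for l d
  proof -
    have "((\<lambda>m. (l+m-a*m)*ev2 P (l+m) d - ((l+d+m+c)*ev2 P l d - (d+m+c)*ev2 P l (m+d) - c*ev2 P (-m-d) d))
       has_field_derivative ((1-a)*ev2 P (l+0) d + (l+0-a*0)*(1*ev2 Hx (l+0) d + 0 * ev2 Hd (l+0) d)
        - ((1*ev2 P l d + (l+d+0+c)*(0 * ev2 Hx l d + 0 * ev2 Hd l d)) - (1*ev2 P l (0+d) + (d+0+c)*(0*ev2 Hx l (0+d) + 1 * ev2 Hd l (0+d)))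
           - c * ((-1) * ev2 Hx (-0-d) d + 0 * ev2 Hd (-0-d) d)))) (at 0)"
      unfolding Hx_def Hd_def by (rule derivative_eq_intros refl | simp)+
    moreover have "(l+m-a*m)*ev2 P (l+m) d - ((l+d+m+c)*ev2 P l d - (d+m+c)*ev2 P l (m+d) - c*ev2 P (-m-d) d) = 0" for m
      using E1[of l m d] c1[of m d] by simp
    ultimately have "(1-a)*ev2 P (l+0) d + (l+0-a*0)*(1*ev2 Hx (l+0) d + 0 * ev2 Hd (l+0) d)
        - ((1*ev2 P l d + (l+d+0+c)*(0 * ev2 Hx l d + 0 * ev2 Hd l d)) - (1*ev2 P l (0+d) + (d+0+c)*(0*ev2 Hx l (0+d) + 1 * ev2 Hd l (0+d)))
           - c * ((-1) * ev2 Hx (-0-d) d + 0 * ev2 Hd (-0-d) d)) = 0"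
      by (rule deriv_zero)
    then show ?thesis by (simp add: algebra_simps)
  qed
  have D2: "- a * ev2 P (-l-d) d + (-l-d-c) * ev2 Hx (-l-d) d + (d+c) * ev2 Hd (-l-d) d + (c+l+d) * ev2 Hx (-l-d) (l+d) - (d+c+a*l) * ev2 Hx (-d) d = 0" for l d
  proof -
    let ?F = "\<lambda>m. (c-m)*ev2 P (-l-m-d) d - (d+l+c)*ev2 P (-m-l-d) (l+d) - (l+d+a*m+c)*ev2 P (-l-d) d
       - ((c-l)*ev2 P (-l-m-d) d - (d+m+c)*ev2 P (-l-m-d) (m+d) - (m+d+a*l+c)*ev2 P (-m-d) d)"
    let ?D = "((-1)*ev2 P (-l-0-d) d + (c-0)*((-1)*ev2 Hx (-l-0-d) d + 0*ev2 Hd (-l-0-d) d))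
      - (0*ev2 P (-0-l-d) (l+d) + (d+l+c)*((-1)*ev2 Hx (-0-l-d) (l+d) + 0*ev2 Hd (-0-l-d) (l+d)))
      - (a*ev2 P (-l-d) d + (l+d+a*0+c)*(0*ev2 Hx (-l-d) d + 0*ev2 Hd (-l-d) d))
      - ((0*ev2 P (-l-0-d) d + (c-l)*((-1)*ev2 Hx (-l-0-d) d + 0*ev2 Hd (-l-0-d) d))
        - (1*ev2 P (-l-0-d) (0+d) + (d+0+c)*((-1)*ev2 Hx (-l-0-d) (0+d) + 1*ev2 Hd (-l-0-d) (0+d)))
        - (1*ev2 P (-0-d) d + (0+d+a*l+c)*((-1)*ev2 Hx (-0-d) d + 0*ev2 Hd (-0-d) d)))"
    have "(?F has_field_derivative ?D) (at 0)"
      unfolding Hx_def Hd_def by (rule derivative_eq_intros refl | simp)+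
    moreover have "?F m = 0" for m
      using E2[of l m d] c1[of "l+m" d] c1[of m "l+d"] c1[of l d] c1[of l "m+d"] c1[of m d]
      by (simp add: algebra_simps)
    ultimately have "?D = 0" by (rule deriv_zero)
    then show ?thesis using z0[of d] by (simp add: algebra_simps)
  qed
  define r where "r t = ev2 Hx (-t) t" for t
  have PDE3: "c * ev2 Hx y d + ev2 P y d = ((a-1)*d + a*y) * r d + (c-y) * r (-y)" for y d
  proof -
    have "c * ev2 Hx y d + ev2 P y d - (((a-1)*d + a*y) * r d + (c-y) * r (-y)) =
      ((1-a) * ev2 P y d + y * ev2 Hx y d + (d+c) * ev2 Hd y d - c * ev2 Hx (-d) d)
      - (- a * ev2 P (-(-y-d)-d) d + (-(-y-d)-d-c) * ev2 Hx (-(-y-d)-d) d + (d+c) * ev2 Hd (-(-y-d)-d) d + (c+(-y-d)+d) * ev2 Hx (-(-y-d)-d) ((-y-d)+d) - (d+c+a*(-y-d)) * ev2 Hx (-d) d)"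
      unfolding r_def by (simp add: algebra_simps)
    also have "\<dots> = 0" using D1[of y d] D2[of "-y-d" d] by simp
    finally show ?thesis by simp
  qed
  define h where "h i = coeff P i" for i
  define Rp where "Rp = poly Hx [:0,-1:]"
  have Rp_ev: "poly Rp t = r t" for t unfolding Rp_def r_def by (simp add: ev2_pcomp)
  have A0: "smult [:1-a:] P + pCons 0 Hx + map_poly ((*) [:c,1:]) Hd - [:smult c Rp:] = 0"
    by (rule ev2_inj) (use D1 in \<open>simp add: ev2_map_mult Rp_ev r_def algebra_simps\<close>)
  have ODE: "[:c,1:] * pderiv (h j) = smult (a - 1 - of_nat j) (h j)" if "j \<ge> 1" for j
  proof -
    define i where "i = j - 1"
    have j: "j = Suc i" using that unfolding i_def by simp
    have "coeff (smult [:1-a:] P + pCons 0 Hx + map_poly ((*) [:c,1:]) Hd - [:smult c Rp:]) j = 0"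
      using A0 by simp
    then have "[:1-a:] * h j + of_nat j * h j + [:c,1:] * pderiv (h j) = 0"
      unfolding j Hx_def Hd_def h_def by (simp add: coeff_pderiv coeff_map_poly)
    then have "smult (1-a) (h j) + smult (of_nat j) (h j) + [:c,1:] * pderiv (h j) = 0"
      by (simp add: of_nat_mult_conv_smult)
    then have "smult (1 - a + of_nat j) (h j) + [:c,1:] * pderiv (h j) = 0"
      by (simp only: smult_add_left)
    then have "[:c,1:] * pderiv (h j) = - smult (1 - a + of_nat j) (h j)"
      by (metis add.commute add_eq_0_iff2)
    also have "\<dots> = smult (a - 1 - of_nat j) (h j)" by (simp flip: smult_minus_left)
    finally show ?thesis .
  qed
  define S where "S = [:c,-1:] * pcompose Rp [:0,-1:]"
  have S_ev: "poly S y = (c - y) * r (-y)" for y unfolding S_def by (simp add: poly_pcompose Rp_ev algebra_simps)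
  have B0: "smult [:c:] Hx + P - [:smult (a-1) ([:0,1:] * Rp):] - pCons 0 [:smult a Rp:] - map_poly (\<lambda>z. [:z:]) S = 0"
    by (rule ev2_inj) (use PDE3 in \<open>simp add: Rp_ev S_ev algebra_simps\<close>)
  have PC2: "smult (c * of_nat (Suc j)) (h (Suc j)) + h j = [:coeff S j:]" if "j \<ge> 2" for j
  proof -
    define i where "i = j - 2"
    have j: "j = Suc (Suc i)" using that unfolding i_def by simp
    have "coeff (smult [:c:] Hx + P - [:smult (a-1) ([:0,1:] * Rp):] - pCons 0 [:smult a Rp:] - map_poly (\<lambda>z. [:z:]) S) j = 0"
      using B0 by simp
    then show ?thesis
      unfolding j Hx_def h_def by (simp add: coeff_pderiv coeff_map_poly of_nat_mult_conv_smult numeral_mult_conv_smult smult_add_left algebra_simps)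
  qed
  have PC1: "smult (2 * c) (h 2) + h 1 - smult a Rp = [:coeff S 1:]"
  proof -
    have "coeff (smult [:c:] Hx + P - [:smult (a-1) ([:0,1:] * Rp):] - pCons 0 [:smult a Rp:] - map_poly (\<lambda>z. [:z:]) S) 1 = 0"
      using B0 by simp
    then show ?thesis
      unfolding Hx_def h_def by (simp add: coeff_pderiv coeff_map_poly of_nat_mult_conv_smult numeral_mult_conv_smult numeral_2_eq_2 algebra_simps)
  qed
  have deg_ode: "a - 1 - of_nat j = of_nat (degree (h j))" if "j \<ge> 1" "h j \<noteq> 0" for j
    using ode_deg[OF ODE[OF that(1)] that(2)] .
  have S2: "degree (h j) = 0" if j2: "j \<ge> 2" for j
  proof (rule ccontr)
    assume nz: "degree (h j) \<noteq> 0"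
    then have hj: "h j \<noteq> 0" by auto
    have k: "a - 1 - of_nat j = of_nat (degree (h j))" using deg_ode[OF _ hj] j2 by simp
    have "degree (smult (c * of_nat (Suc j)) (h (Suc j)) + h j) = degree (h j)"
    proof (cases "h (Suc j) = 0")
      case True then show ?thesis by simp
    next
      case False
      then have "a - 1 - of_nat (Suc j) = of_nat (degree (h (Suc j)))" using deg_ode[of "Suc j"] by simp
      with k have "of_nat (degree (h (Suc j)) + 1) = (of_nat (degree (h j)) :: complex)"
        by (simp flip: k add: algebra_simps)
      then have "degree (h (Suc j)) + 1 = degree (h j)" using of_nat_eq_iff by blast
      then have "degree (smult (c * of_nat (Suc j)) (h (Suc j))) < degree (h j)"
        using degree_smult_le[of "c * of_nat (Suc j)" "h (Suc j)"] by linarith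
      then show ?thesis by (rule degree_add_eq_right)
    qed
    with PC2[OF j2] nz show False by simp
  qed
  have a_j: "a = of_nat j + 1" if "j \<ge> 2" "h j \<noteq> 0" for j
    using deg_ode[of j] S2[of j] that by (simp add: diff_eq_eq)
  have Hx_ev_gen: "ev2 Hx x d = ev2 (pderiv P) x d" for x d unfolding Hx_def ..
  have P0: "\<forall>x d. ev2 P x d = 0" if hz: "\<And>j. j \<ge> 1 \<Longrightarrow> h j = 0"
  proof -
    have "P = [:h 0:]"
    proof (rule poly_eqI)
      fix i show "coeff P i = coeff [:h 0:] i"
        using hz[of i] by (cases i) (simp_all add: h_def)
    qed
    then have "ev2 P x d = poly (h 0) d" for x d by simp
    moreover have "poly (h 0) d = 0" for d using z0[of d] \<open>P = [:h 0:]\<close> by simp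
    ultimately show ?thesis by simp
  qed
  have Hcases: "(\<forall>x d. ev2 P x d = 0) \<or> (a = 2 \<and> (\<exists>C. \<forall>x d. ev2 P x d = C*(x+d)))
     \<or> (a = 3 \<and> (\<exists>C. \<forall>x d. ev2 P x d = C*(x^2 + 3*x*d + 3*c*x + 2*d^2 + 3*c*d)))"
  proof (cases "\<exists>n::nat. n \<ge> 1 \<and> a = of_nat n + 1")
    case False
    have "h j = 0" if "j \<ge> 1" for j
    proof (rule ccontr)
      assume hj: "h j \<noteq> 0"
      show False
      proof (cases "j \<ge> 2")
        case True then show False using a_j[OF True hj] False by auto
      next
        case False2: False
        then have j1: "j = 1" using that by simp
        have "a - 1 - 1 = of_nat (degree (h 1))" using deg_ode[of 1] hj j1 by simp
        then have "a = of_nat (degree (h 1) + 1) + 1" by (simp add: algebra_simps diff_eq_eq)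
        then show False using False by (metis le_add2)
      qed
    qed
    then show ?thesis using P0 by blast
  next
    case True
    then obtain n :: nat where n1: "n \<ge> 1" and an: "a = of_nat n + 1" by blast
    have h1: "h 1 = smult (coeff (h 1) (n-1)) ([:c,1:]^(n-1))"
    proof (rule ode_sol)
      have "a - 1 - of_nat 1 = (of_nat (n-1) :: complex)" using an n1 by (simp add: of_nat_diff)
      then show "[:c,1:] * pderiv (h 1) = smult (of_nat (n-1)) (h 1)" using ODE[of 1] by simp
    qed
    have hj: "h j = 0" if "j \<ge> 2" "j \<noteq> n" for j
    proof (rule ccontr)
      assume "h j \<noteq> 0"
      then have "a = of_nat j + 1" using a_j that by blast
      then have "(of_nat j :: complex) = of_nat n" using an by simp
      then show False using that by simp
    qed
    have hn: "h n = [:coeff (h n) 0:]" if "n \<ge> 2" using degree_0_id[OF S2[OF that]] by simp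
    consider (one) "n = 1" | (two) "n = 2" | (three) "n \<ge> 3" using n1 by linarith
    then show ?thesis
    proof cases
      case one
      define C1 where "C1 = coeff (h 1) 0"
      have h1': "h 1 = [:C1:]" using h1 one by (simp add: C1_def)
      have "P = [:h 0, [:C1:]:]"
      proof (rule poly_eqI)
        fix i show "coeff P i = coeff [:h 0, [:C1:]:] i"
          using hj[of i] h1' one by (cases i; cases "i - 1") (simp_all add: h_def)
      qed
      then have ev: "ev2 P x d = poly (h 0) d + x * C1" for x d by simp
      have "poly (h 0) d = C1 * d" for d using z0[of d] ev[of "-d" d] by (simp add: algebra_simps)
      then have "\<forall>x d. ev2 P x d = C1 * (x + d)" using ev by (simp add: algebra_simps)
      moreover have "a = 2" using an one by simp
      ultimately show ?thesis by blast
    next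
      case two
      define C1 where "C1 = coeff (h 1) 1"
      define C2 where "C2 = coeff (h 2) 0"
      have h1': "h 1 = smult C1 [:c,1:]" using h1 two by (simp add: C1_def)
      have h2': "h 2 = [:C2:]" using hn two by (simp add: C2_def)
      have Pe: "P = [:h 0, smult C1 [:c,1:], [:C2:]:]"
      proof (rule poly_eqI)
        fix i show "coeff P i = coeff [:h 0, smult C1 [:c,1:], [:C2:]:] i"
          using hj[of i] h1' h2' two by (cases i; cases "i - 1"; cases "i - 2") (simp_all add: h_def numeral_2_eq_2)
      qed
      have ev: "ev2 P x d = poly (h 0) d + x * (C1 * (c + d) + x * C2)" for x d
        by (subst Pe) (simp add: algebra_simps)
      have evx: "ev2 Hx x d = C1 * (c + d) + 2 * x * C2" for x d
        unfolding Hx_def by (subst Pe) (simp add: pderiv_pCons algebra_simps)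
      have pt: "2*c*C2 + C1*(c+t) - 3*(C1*(c+t) - 2*t*C2) = coeff S 1" for t
      proof -
        have "poly (smult (2 * c) (h 2) + h 1 - smult a Rp) t = poly [:coeff S 1:] t" using PC1 by simp
        moreover have "h (Suc 0) = smult C1 [:c,1:]" using h1' by simp
        ultimately show ?thesis using an two by (simp add: h1' h2' Rp_ev r_def evx algebra_simps)
      qed
      have C1v: "C1 = 3 * C2" using pt[of 0] pt[of 1] by (simp add: algebra_simps)
      have "poly (h 0) d = d * C1 * (c + d) - d^2 * C2" for d
        using z0[of d] ev[of "-d" d] by (simp add: algebra_simps power2_eq_square)
      then have "\<forall>x d. ev2 P x d = C2*(x^2 + 3*x*d + 3*c*x + 2*d^2 + 3*c*d)"
        using ev C1v by (simp add: algebra_simps power2_eq_square)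
      moreover have "a = 3" using an two by simp
      ultimately show ?thesis by blast
    next
      case three
      define k where "k = n - 1"
      have nk: "n = Suc k" and k2: "k \<ge> 2" using three unfolding k_def by auto
      define C1 where "C1 = coeff (h 1) k"
      define Cn where "Cn = coeff (h n) 0"
      have h1': "h 1 = smult C1 ([:c,1:]^k)" using h1 by (simp add: C1_def k_def)
      have h1'': "h (Suc 0) = smult C1 ([:c,1:]^k)" using h1' by simp
      have hn': "h n = [:Cn:]" using hn three by (simp add: Cn_def)
      have h2: "h 2 = 0" using hj[of 2] three by simp
      have Pe: "P = pCons (h 0) (pCons (h 1) 0) + monom [:Cn:] n"
      proof (rule poly_eqI)
        fix i show "coeff P i = coeff (pCons (h 0) (pCons (h 1) 0) + monom [:Cn:] n) i"
        proof -
          consider "i = 0" | "i = 1" | "i = n" | "i \<ge> 2" "i \<noteq> n" by linarith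
          then show ?thesis
          proof cases
            case 1 then show ?thesis using nk by (simp add: h_def)
          next
            case 2 then show ?thesis using nk k2 by (simp add: h_def coeff_monom)
          next
            case 3 then show ?thesis using nk k2 hn' by (simp add: h_def coeff_pCons split: nat.split)
          next
            case 4 then show ?thesis using hj[of i] by (simp add: h_def coeff_pCons coeff_monom split: nat.split)
          qed
        qed
      qed
      have evx: "ev2 Hx x d = poly (h 1) d + of_nat n * Cn * x^k" for x d
        unfolding Hx_def by (subst Pe) (simp add: pderiv_add pderiv_monom pderiv_pCons nk)
      have pt: "poly (h 1) t - of_nat (k+2) * (poly (h 1) t + of_nat (k+1) * Cn * (-t)^k) = coeff S 1" for t
      proof -
        have "poly (smult (2 * c) (h 2) + h 1 - smult a Rp) t = poly [:coeff S 1:] t" using PC1 by simp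
        then show ?thesis using an nk h2 by (simp add: Rp_ev r_def evx algebra_simps)
      qed
      have ph0: "poly (h 1) t = C1 * (c + t)^k" for t using h1' by (simp add: algebra_simps)
      have ph: "poly (h (Suc 0)) t = C1 * (c + t)^k" for t using ph0 by simp
      have k0: "k \<noteq> 0" using k2 by simp
      have eA: "- (of_nat (k+2) * of_nat (k+1) * Cn * c^k) = coeff S 1"
        using pt[of "-c"] k0 by (simp add: ph power_0_left algebra_simps)
      have eB: "- (of_nat (k+1) * C1 * c^k) = coeff S 1"
        using pt[of 0] k0 by (simp add: ph power_0_left algebra_simps)
      have eC: "- (of_nat (k+1) * C1 * 2^k * c^k) - of_nat (k+2) * of_nat (k+1) * Cn * (-1)^k * c^k = coeff S 1"
        using pt[of c] k0 by (simp add: ph algebra_simps power_mult_distrib power_minus[of c])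
      have ck: "c^k \<noteq> 0" using c0 by simp
      have k1: "(of_nat (k+1) :: complex) \<noteq> 0" by (simp only: of_nat_eq_0_iff)
      have C1v: "C1 = of_nat (k+2) * Cn"
      proof -
        have "- (of_nat (k+2) * of_nat (k+1) * Cn * c^k) = - (of_nat (k+1) * C1 * c^k)" by (simp only: eA eB)
        then have e1: "of_nat (k+2) * of_nat (k+1) * Cn * c^k = of_nat (k+1) * C1 * c^k" by (simp only: neg_equal_iff_equal)
        have "of_nat (k+1) * c^k * (C1 - of_nat (k+2) * Cn) = of_nat (k+1) * C1 * c^k - of_nat (k+2) * of_nat (k+1) * Cn * c^k"
          by (simp add: algebra_simps)
        also have "\<dots> = 0" by (simp only: e1 diff_self)
        finally have "of_nat (k+1) * c^k * (C1 - of_nat (k+2) * Cn) = 0" .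
        then show ?thesis using ck k1 c0 by auto
      qed
      have br: "(2::complex)^k + (-1)^k - 1 \<noteq> 0"
      proof (cases "even k")
        case True then show ?thesis by simp
      next
        case False
        have "(2::nat)^k \<ge> 2^2" using k2 by (rule power_increasing) simp
        then have "(2::nat)^k \<noteq> 2" by simp
        then have "(of_nat (2^k) :: complex) \<noteq> of_nat 2" by (simp only: of_nat_eq_iff) simp
        then show ?thesis using False by simp
      qed
      have e2: "- (of_nat (k+1) * C1 * 2^k * c^k) - of_nat (k+2) * of_nat (k+1) * Cn * (-1)^k * c^k = - (of_nat (k+2) * of_nat (k+1) * Cn * c^k)"
        by (simp only: eA eC)
      have "of_nat (k+1) * of_nat (k+2) * Cn * c^k * ((2::complex)^k + (-1)^k - 1) =
         - (- (of_nat (k+1) * C1 * 2^k * c^k) - of_nat (k+2) * of_nat (k+1) * Cn * (-1)^k * c^k) - of_nat (k+2) * of_nat (k+1) * Cn * c^k"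
        by (simp add: C1v algebra_simps)
      also have "\<dots> = 0" by (simp only: e2 minus_minus diff_self)
      finally have "of_nat (k+1) * of_nat (k+2) * Cn * c^k * ((2::complex)^k + (-1)^k - 1) = 0" .
      moreover have "(of_nat (k+2) :: complex) \<noteq> 0" by (simp only: of_nat_eq_0_iff)
      ultimately have Cn0: "Cn = 0" using ck k1 br c0 by auto
      have "h j = 0" if "j \<ge> 1" for j
      proof -
        have "j = 1 \<or> j = n \<or> (j \<ge> 2 \<and> j \<noteq> n)" using that by linarith
        then consider "j = 1" | "j = n" | "j \<ge> 2" "j \<noteq> n" by blast
        then show ?thesis
          by cases (use h1' C1v Cn0 hn' hj in auto)
      qed
      then show ?thesis using P0 by blast
    qed
  qed
  have K1const: "\<forall>l d. ev2 R1 l d = ev2 R1 0 0" if K: "\<And>l d. ev2 R2 l d = K" for K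
  proof (intro allI)
    fix l d
    have sw: "ev2 R1 m (l+d) = ev2 R1 l (m+d)" for l m d
      using E6[of m l d] K c0 by simp
    have "ev2 R1 l d = ev2 R1 0 (l+d)" using sw[of 0 l d] by simp
    also have "\<dots> = ev2 R1 (-(l+d)) (l+d)" using c2[of 0 "l+d"] by simp
    also have "\<dots> = ev2 R1 0 0" using sw[of "-(l+d)" 0 "l+d"] by simp
    finally show "ev2 R1 l d = ev2 R1 0 0" .
  qed
  have HZ: "\<forall>x d. ev2 P x d = 0"
  proof -
    { fix C assume a2: "a = 2" and C: "\<And>x d. ev2 P x d = C*(x+d)"
      have G: "ev2 Q m t = - C * m" for m t using c1[of m t] C by (simp add: algebra_simps)
      have K2i: "ev2 R2 l d = ev2 R2 0 d" for l d using E5W[where l=l and m=0 and d=d] C by (simp add: algebra_simps)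
      define f where "f t = ev2 R2 0 t" for t
      have eq: "(d+2*m+c)*f (m+d) - (d+c+3*m)*f d = - c*C*m" for m d
        using E3[where l=0 and m=m and d=d] K2i[where l=m and d=d] G[where m=m and t=d] a2 unfolding f_def by (simp add: algebra_simps)
      have i1: "2*m*f (m-c) - 3*m*f (-c) = - c*C*m" for m using eq[where m=m and d="-c"] by (simp add: algebra_simps)
      have A: "2 * f (-c-1) = f (-c) + c*C" using eq[where m=1 and d="-c-1"] by (simp add: algebra_simps)
      have B: "3 * f (-c) = c*C + 2 * f (-c-1)"
      proof -
        have mc: "-1 - c = -c - 1" by simp
        show ?thesis using i1[where m="-1"] by (simp add: mc algebra_simps)
      qed
      have "3 * f (-c) = c*C + (f (-c) + c*C)" using B unfolding A .
      then have "2 * (f (-c) - c*C) = 0" by (simp add: algebra_simps)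
      then have fc: "f (-c) = c*C" by simp
      have fall: "f t = c*C" for t
      proof (cases "t = -c")
        case True then show ?thesis using fc by simp
      next
        case False
        then have "t + c \<noteq> 0" by (metis add.commute add_eq_0_iff2)
        moreover have "(t+c) * (2 * f t - 2*c*C) = 0" using i1[of "t+c"] fc by (simp add: algebra_simps)
        ultimately show ?thesis by simp
      qed
      have "\<forall>l d. ev2 R1 l d = ev2 R1 0 0" using K1const[of "c*C"] K2i fall unfolding f_def by simp
      then have r10: "ev2 R1 1 0 = ev2 R1 0 0" by blast
      have "C * C = 0" using E5L[of 1 0 0] C r10 by simp
      then have "C = 0" by simp
      then have ?thesis using C by simp }
    note a2case = this
    { fix C assume a3: "a = 3" and C: "\<And>x d. ev2 P x d = C*(x^2 + 3*x*d + 3*c*x + 2*d^2 + 3*c*d)"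
      have G: "ev2 Q m t = C * m * (m - t - 3*c)" for m t using c1[of m t] C by (simp add: algebra_simps power2_eq_square)
      have K2i: "ev2 R2 l d = ev2 R2 0 d + ev2 P l d - ev2 P 0 (l+d)" for l d using E5W[where l=l and m=0 and d=d] by (simp add: algebra_simps)
      have e0: "(m - 3*m)*ev2 R2 m d - (d+3*m+c)*ev2 R2 0 d + (d+3*m+c)*ev2 R2 0 (m+d) = c * ev2 Q m d" for m d
        using E3[of 0 m d] a3 by simp
      have I1: "ev2 R2 0 0 = 16/9*c^2*C"
      proof -
        have "(2*c/3) * ev2 R2 (-c/3) 0 = c * ev2 Q (-c/3) 0" using e0[where m="-c/3" and d=0] by (simp add: algebra_simps)
        then have X: "ev2 R2 (-c/3) 0 = 5/3*c^2*C" using c0 by (simp add: G field_simps power2_eq_square)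
        have "ev2 R2 0 0 = ev2 R2 (-c/3) 0 - ev2 P (-c/3) 0 + ev2 P 0 (-c/3+0)"
          using K2i[where l="-c/3" and d=0] by simp
        then show ?thesis unfolding X C by (simp add: field_simps power2_eq_square)
      qed
      have I2: "ev2 R2 0 c = 19/9*c^2*C"
      proof -
        have "(4*c/3) * ev2 R2 (-2*c/3) c = c * ev2 Q (-2*c/3) c" using e0[where m="-2*c/3" and d=c] by (simp add: algebra_simps)
        then have X: "ev2 R2 (-2*c/3) c = 7/3*c^2*C" using c0 by (simp add: G field_simps power2_eq_square)
        have "ev2 R2 0 c = ev2 R2 (-2*c/3) c - ev2 P (-2*c/3) c + ev2 P 0 (-2*c/3+c)"
          using K2i[where l="-2*c/3" and d=c] by simp
        then show ?thesis unfolding X C by (simp add: field_simps power2_eq_square)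
      qed
      have "-2*c*ev2 R2 c 0 - 4*c*ev2 R2 0 0 + 4*c*ev2 R2 0 c = c * ev2 Q c 0" using e0[where m=c and d=0] by (simp add: algebra_simps)
      then have "16/9*c^3*C = 0" using K2i[where l=c and d=0] I1 I2 by (simp add: G C algebra_simps power2_eq_square power3_eq_cube)
      then have "C = 0" using c0 by simp
      then have ?thesis using C by simp }
    note a3case = this
    show ?thesis using Hcases a2case a3case by blast
  qed
  have GZ: "ev2 Q l d = 0" for l d using c1[of l d] HZ by simp
  have PZ: "P = 0" by (rule ev2_inj) (use HZ in simp)
  have QZ: "Q = 0" by (rule ev2_inj) (use GZ in simp)
  define f where "f t = ev2 R2 0 t" for t
  have K2i: "ev2 R2 l d = f d" for l d using E5W[where l=l and m=0 and d=d] HZ unfolding f_def by simp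
  have feq: "(d+a*m+c) * f (m+d) = (d+c+(2*a-1)*m) * f d" for m d
    using E3[where l=0 and m=m and d=d] GZ K2i by (simp add: algebra_simps)
  have fpoly: "f t = poly (coeff R2 0) t" for t unfolding f_def by (rule ev2_x0)
  obtain K where fK: "\<And>t. f t = K" and aK: "a \<noteq> 1 \<Longrightarrow> K = 0"
  proof (cases "a = 1")
    case True
    have "f t = f 0" if "t \<noteq> -c" for t
    proof -
      have "(t + c) * f t = (t + c) * f 0" using feq[where m=t and d=0] True by (simp add: algebra_simps)
      moreover have "t + c \<noteq> 0" using that by (metis add.commute add_eq_0_iff2)
      ultimately show ?thesis by simp
    qed
    then have "poly (coeff R2 0) (-c) = f 0" using poly_cont[of "-c" "coeff R2 0" "f 0"] fpoly by simp
    then have "f t = f 0" for t using \<open>\<And>t. t \<noteq> -c \<Longrightarrow> f t = f 0\<close> fpoly by (cases "t = -c") auto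
    then show ?thesis using that True by blast
  next
    case False
    have "f t = 0" if "t \<noteq> -c" for t
    proof (cases "2*a - 1 = 0")
      case True
      then have ah: "a = 1/2" by (simp add: field_simps)
      have "(t + c) * f t = 0" using feq[where m="t+c" and d="-c"] ah by (simp add: algebra_simps)
      moreover have "t + c \<noteq> 0" using that by (metis add.commute add_eq_0_iff2)
      ultimately show ?thesis by simp
    next
      case False2: False
      have a1: "2*a - 2 \<noteq> 0" using False by simp
      define d where "d = (t*(2*a-1)+c)/(2*a-2)"
      define m where "m = -(t+c)/(2*a-2)"
      define e where "e = 2*a - 2"
      have e0: "e \<noteq> 0" using a1 unfolding e_def .
      have ae: "a = (e + 2)/2" unfolding e_def by simp
      have md: "m + d = t" unfolding m_def d_def e_def[symmetric] using e0 by (simp add: ae field_simps)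
      have c1': "d + a*m + c = (t+c)/2" unfolding m_def d_def e_def[symmetric] using e0 by (simp add: ae field_simps)
      have c2': "d + c + (2*a-1)*m = 0" unfolding m_def d_def e_def[symmetric] using e0 by (simp add: ae field_simps)
      have "(t+c)/2 * f t = 0" using feq[where m=m and d=d] md c1' c2' by simp
      moreover have "t + c \<noteq> 0" using that by (metis add.commute add_eq_0_iff2)
      ultimately show ?thesis by simp
    qed
    then have "poly (coeff R2 0) (-c) = 0" using poly_cont[of "-c" "coeff R2 0" 0] fpoly by simp
    then have "f t = 0" for t using \<open>\<And>t. t \<noteq> -c \<Longrightarrow> f t = 0\<close> fpoly by (cases "t = -c") auto
    then show ?thesis using that by blast
  qed
  have R2c: "ev2 R2 l d = K" for l d using K2i fK by simp
  define \<kappa> where "\<kappa> = ev2 R1 0 0"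
  have R1c: "ev2 R1 l d = \<kappa>" for l d using K1const[of K] R2c unfolding \<kappa>_def by blast
  have aka: "(1 - a) * \<kappa> = 0"
  proof -
    have "(2 - 2*a) * \<kappa> = 0" using E4[where l=0 and m=1 and d=0] R1c R2c GZ HZ by (simp add: algebra_simps)
    then show ?thesis by (simp add: algebra_simps)
  qed
  have R1e: "R1 = [:[:\<kappa>:]:]" by (rule ev2_inj[of "R1 - [:[:\<kappa>:]:]", simplified]) (simp add: R1c)
  have R2e: "R2 = [:[:K:]:]" by (rule ev2_inj[of "R2 - [:[:K:]:]", simplified]) (simp add: R2c)
  show ?thesis
  proof (cases "a = 1 \<and> (\<kappa>, K) \<noteq> (0, 0)")
    case True
    then have "a = 1 \<and> sc Wg Lg Lg = 0 \<and> sc Lg Wg Lg = 0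
          \<and> sc Wg Lg Wg = [:[:c:]:] \<and> sc Lg Wg Wg = [:[:c, 1:], [:1:]:]
          \<and> (\<exists>k1 k2. sc Wg Wg Lg = [:[:k1:]:] \<and> sc Wg Wg Wg = [:[:k2:]:] \<and> (k1, k2) \<noteq> (0, 0))"
      using PZ QZ R1e R2e g2 h2 unfolding P_def Q_def R1_def R2_def by auto
    then show ?thesis by blast
  next
    case False
    have z: "\<kappa> = 0 \<and> K = 0"
    proof (cases "a = 1")
      case True then show ?thesis using False by simp
    next
      case False then show ?thesis using aka aK by simp
    qed
    then have "sc Wg Lg Lg = 0 \<and> sc Lg Wg Lg = 0 \<and> sc Wg Wg Lg = 0 \<and> sc Wg Wg Wg = 0
          \<and> sc Wg Lg Wg = [:[:c:]:] \<and> sc Lg Wg Wg = [:[:c, 1:], [:a:]:]"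
      using PZ QZ R1e R2e g2 h2 unfolding P_def Q_def R1_def R2_def by simp
    then show ?thesis by blast
  qed
qed
end
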